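(* Let $T_1,T_2$ be $2\times2$ matrices with entries in $\{0,1\}$, neither having a zero row, and let $\alpha_i=T_1^{(i)}\otimes T_2^{(i)}$ for $i=1,2$. If $\alpha_1>\alpha_2$ or $\alpha_2>\alpha_1$, then the associated recurrence system is of dominating type.
   Context: $T_k^{(i)}$ is the $i$-th row of $T_k$ and $(v_1,v_2)\otimes(w_1,w_2)=(v_1w_1,v_1w_2,v_2w_1,v_2w_2)$. For vectors, $v\ge w$ means $v_i\ge w_i$ for every coordinate, and $v>w$ means $v\ge w$ and $v\ne w$. The recurrence system: $\gamma^{[s_j]}_{i,0}=1$ and for $n\ge1$ $$\gamma^{[s_1]}_{i,n}=\sum_{j,k=1}^2T_1(i,j)T_2(i,k)\,\gamma^{[s_1]}_{j,n-1}\gamma^{[s_2]}_{k,n-1},\qquad \gamma^{[s_2]}_{i,n}=\sum_{j=1}^2T_1(i,j)\,\gamma^{[s_1]}_{j,n-1}.$$ The items of $\gamma^{[s_1]}_{i,n}$ are the products $\gamma^{[s_1]}_{j,n-1}\gamma^{[s_2]}_{k,n-1}$ indexed by the pairs $(j,k)$ with $T_1(i,j)T_2(i,k)=1$; the items of $\gamma^{[s_2]}_{i,n}$ are the terms $\gamma^{[s_1]}_{j,n-1}$ indexed by the $j$ with $T_1(i,j)=1$. Thus $\gamma^{[s_j]}_{i,n}=\sum_{l}f^{ij}_{l,n-1}$ where $f^{ij}_{l,n-1}$ is the $l$-th item. $\gamma^{[s_j]}_{i,n}$ has a dominate item if there is an index $r$ such that $f^{ij}_{r,n}\ge f^{ij}_{l,n}$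 for every index $l\ne r$ and every $n\ge1$. The system is of dominating type if each of $\gamma^{[s_1]}_{1,n},\gamma^{[s_1]}_{2,n},\gamma^{[s_2]}_{1,n},\gamma^{[s_2]}_{2,n}$ has a dominate item. *)

theory Defs
  imports Main
begin

text \<open>2x2 matrices are functions nat => nat => nat, used on indices 1 and 2.\<close>

definition zero_one_matrix :: "(nat \<Rightarrow> nat \<Rightarrow> nat) \<Rightarrow> bool" where
  "zero_one_matrix T \<longleftrightarrow> (\<forall>i\<in>{1,2}. \<forall>j\<in>{1,2}. T i j \<in> {0,1})"

definition no_zero_row :: "(nat \<Rightarrow> nat \<Rightarrow> nat) \<Rightarrow> bool" where
  "no_zero_row T \<longleftrightarrow> (\<forall>i\<in>{1,2}. \<exists>j\<in>{1,2}. T i j \<noteq> 0)"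

definition mrow :: "(nat \<Rightarrow> nat \<Rightarrow> nat) \<Rightarrow> nat \<Rightarrow> nat \<times> nat" where
  "mrow T i = (T i 1, T i 2)"

definition tensor2 :: "nat \<times> nat \<Rightarrow> nat \<times> nat \<Rightarrow> nat list" where
  "tensor2 v w = [fst v * fst w, fst v * snd w, snd v * fst w, snd v * snd w]"

definition alpha :: "(nat \<Rightarrow> nat \<Rightarrow> nat) \<Rightarrow> (nat \<Rightarrow> nat \<Rightarrow> nat) \<Rightarrow> nat \<Rightarrow> nat list" where
  "alpha T1 T2 i = tensor2 (mrow T1 i) (mrow T2 i)"

definition vec_ge :: "nat list \<Rightarrow> nat list \<Rightarrow> bool" where
  "vec_ge v w \<longleftrightarrow> length v = length w \<and> (\<forall>i<length v. w ! i \<le> v ! i)"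

definition vec_gt :: "nat list \<Rightarrow> nat list \<Rightarrow> bool" where
  "vec_gt v w \<longleftrightarrow> vec_ge v w \<and> v \<noteq> w"

text \<open>gam T1 T2 n = (gamma^[s1]_{.,n}, gamma^[s2]_{.,n}) as functions of i.\<close>
fun gam :: "(nat \<Rightarrow> nat \<Rightarrow> nat) \<Rightarrow> (nat \<Rightarrow> nat \<Rightarrow> nat) \<Rightarrow> nat \<Rightarrow> (nat \<Rightarrow> nat) \<times> (nat \<Rightarrow> nat)" where
  "gam T1 T2 0 = (\<lambda>i. 1, \<lambda>i. 1)"
| "gam T1 T2 (Suc n) =
     (\<lambda>i. \<Sum>j\<in>{1,2}. \<Sum>k\<in>{1,2}. T1 i j * T2 i k * fst (gam T1 T2 n) j * snd (gam T1 T2 n) k,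
      \<lambda>i. \<Sum>j\<in>{1,2}. T1 i j * fst (gam T1 T2 n) j)"

definition gamma1 where "gamma1 T1 T2 i n = fst (gam T1 T2 n) i"
definition gamma2 where "gamma2 T1 T2 i n = snd (gam T1 T2 n) i"

text \<open>Items of gamma^[s1]_{i,n+1}: indexed by pairs (j,k) with T1(i,j)T2(i,k)=1;
  the item f^{i1}_{(j,k),n} = gamma1_{j,n} gamma2_{k,n}.\<close>
definition items1 :: "(nat \<Rightarrow> nat \<Rightarrow> nat) \<Rightarrow> (nat \<Rightarrow> nat \<Rightarrow> nat) \<Rightarrow> nat \<Rightarrow> (nat \<times> nat) set" where
  "items1 T1 T2 i = {(j,k). j \<in> {1,2} \<and> k \<in> {1,2} \<and> T1 i j * T2 i k = 1}"

definition item1 :: "(nat \<Rightarrow> nat \<Rightarrow> nat) \<Rightarrow> (nat \<Rightarrow> nat \<Rightarrow> nat) \<Rightarrow> nat \<times> nat \<Rightarrow> nat \<Rightarrow> nat" where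
  "item1 T1 T2 l n = gamma1 T1 T2 (fst l) n * gamma2 T1 T2 (snd l) n"

text \<open>Items of gamma^[s2]_{i,n+1}: indexed by j with T1(i,j)=1; item = gamma1_{j,n}.\<close>
definition items2 :: "(nat \<Rightarrow> nat \<Rightarrow> nat) \<Rightarrow> nat \<Rightarrow> nat set" where
  "items2 T1 i = {j. j \<in> {1,2} \<and> T1 i j = 1}"

definition item2 :: "(nat \<Rightarrow> nat \<Rightarrow> nat) \<Rightarrow> (nat \<Rightarrow> nat \<Rightarrow> nat) \<Rightarrow> nat \<Rightarrow> nat \<Rightarrow> nat" where
  "item2 T1 T2 j n = gamma1 T1 T2 j n"

definition has_dominate_item :: "'a set \<Rightarrow> ('a \<Rightarrow> nat \<Rightarrow> nat) \<Rightarrow> bool" where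
  "has_dominate_item L f \<longleftrightarrow>
     (\<exists>r\<in>L. \<forall>n\<ge>1. \<forall>l\<in>L. l \<noteq> r \<longrightarrow> f l n \<le> f r n)"

definition dominating_type :: "(nat \<Rightarrow> nat \<Rightarrow> nat) \<Rightarrow> (nat \<Rightarrow> nat \<Rightarrow> nat) \<Rightarrow> bool" where
  "dominating_type T1 T2 \<longleftrightarrow>
     (\<forall>i\<in>{1,2}. has_dominate_item (items1 T1 T2 i) (item1 T1 T2)
               \<and> has_dominate_item (items2 T1 i) (item2 T1 T2))"

end

theory Submission
  imports Defs
begin

lemma gam_mono:
  assumes "\<And>j. j \<in> {1,2} \<Longrightarrow> T1 q j \<le> T1 p j"
    and "\<And>k. k \<in> {1,2} \<Longrightarrow> T2 q k \<le> T2 p k"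
  shows "gamma1 T1 T2 q n \<le> gamma1 T1 T2 p n \<and> gamma2 T1 T2 q n \<le> gamma2 T1 T2 p n"
proof (cases n)
  case 0 then show ?thesis by (simp add: gamma1_def gamma2_def)
next
  case (Suc m)
  have a: "(\<Sum>j\<in>{1,2}. \<Sum>k\<in>{1,2}. T1 q j * T2 q k * X j * Y k)
        \<le> (\<Sum>j\<in>{1,2}. \<Sum>k\<in>{1,2}. T1 p j * T2 p k * X j * Y k)" for X Y :: "nat \<Rightarrow> nat"
    by (intro sum_mono mult_right_mono mult_mono) (auto simp: assms)
  have b: "(\<Sum>j\<in>{1,2}. T1 q j * X j) \<le> (\<Sum>j\<in>{1,2}. T1 p j * X j)" for X :: "nat \<Rightarrow> nat"
    by (intro sum_mono mult_right_mono) (auto simp: assms)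
  show ?thesis using a b by (simp add: Suc gamma1_def gamma2_def del: insert_iff)
qed

lemma dom_items:
  assumes pq: "{p,q} = {(1::nat),2}"
    and m1: "\<And>n. gamma1 T1 T2 q n \<le> gamma1 T1 T2 p n"
    and m2: "\<And>n. gamma2 T1 T2 q n \<le> gamma2 T1 T2 p n"
    and z1: "zero_one_matrix T1" and z2: "zero_one_matrix T2"
    and n1: "no_zero_row T1" and n2: "no_zero_row T2"
    and i: "i \<in> {1,2}"
  shows "has_dominate_item (items1 T1 T2 i) (item1 T1 T2) \<and> has_dominate_item (items2 T1 i) (item2 T1 T2)"
proof -
  have e1: "\<And>j. j \<in> {1,2} \<Longrightarrow> T1 i j = 0 \<or> T1 i j = 1" using z1 i unfolding zero_one_matrix_def by (auto simp del: insert_iff)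
  have e2: "\<And>j. j \<in> {1,2} \<Longrightarrow> T2 i j = 0 \<or> T2 i j = 1" using z2 i unfolding zero_one_matrix_def by (auto simp del: insert_iff)
  have r1: "\<exists>j\<in>{1,2}. T1 i j \<noteq> 0" using n1 i unfolding no_zero_row_def by blast
  have r2: "\<exists>j\<in>{1,2}. T2 i j \<noteq> 0" using n2 i unfolding no_zero_row_def by blast
  have pq': "p \<in> {1,2}" "q \<in> {1,2}" "\<And>x. x \<in> {1,2} \<Longrightarrow> x = p \<or> x = q" using pq by auto
  define j0 where "j0 = (if T1 i p = 1 then p else q)"
  define k0 where "k0 = (if T2 i p = 1 then p else q)"
  have j0m: "j0 \<in> {1,2}" "k0 \<in> {1,2}" unfolding j0_def k0_def using pq' by simp_all
  have "T1 i j0 = 1" unfolding j0_def using r1 e1 pq' by (smt (verit))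
  then have j0: "T1 i j0 = 1" "j0 \<in> {1,2}" using j0m by auto
  have "T2 i k0 = 1" unfolding k0_def using r2 e2 pq' by (smt (verit))
  then have k0: "T2 i k0 = 1" "k0 \<in> {1,2}" using j0m by auto
  have gj: "gamma1 T1 T2 j n \<le> gamma1 T1 T2 j0 n" if "j \<in> {1,2}" "T1 i j = 1" for j n
    using pq'(3)[OF that(1)] that m1[of n] unfolding j0_def by auto
  have gk: "gamma2 T1 T2 k n \<le> gamma2 T1 T2 k0 n" if "k \<in> {1,2}" "T2 i k = 1" for k n
    using pq'(3)[OF that(1)] that m2[of n] unfolding k0_def by auto
  have A: "has_dominate_item (items1 T1 T2 i) (item1 T1 T2)"
    unfolding has_dominate_item_def
  proof (rule bexI[of _ "(j0,k0)"])
    show "(j0,k0) \<in> items1 T1 T2 i" using j0 k0 by (simp add: items1_def)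
    show "\<forall>n\<ge>1. \<forall>l\<in>items1 T1 T2 i. l \<noteq> (j0, k0) \<longrightarrow> item1 T1 T2 l n \<le> item1 T1 T2 (j0, k0) n"
    proof (intro allI impI ballI)
      fix n l assume l: "l \<in> items1 T1 T2 i"
      obtain j k where l': "l = (j,k)" by force
      have "T1 i j = 1" "T2 i k = 1" "j \<in> {1,2}" "k \<in> {1,2}" using l l' e1 e2 by (auto simp: items1_def)
      then show "item1 T1 T2 l n \<le> item1 T1 T2 (j0, k0) n"
        using gj gk l' by (simp add: item1_def mult_le_mono)
    qed
  qed
  have B: "has_dominate_item (items2 T1 i) (item2 T1 T2)"
    unfolding has_dominate_item_def
  proof (rule bexI[of _ j0])
    show "j0 \<in> items2 T1 i" using j0 by (simp add: items2_def)
    show "\<forall>n\<ge>1. \<forall>l\<in>items2 T1 i. l \<noteq> j0 \<longrightarrow> item2 T1 T2 l n \<le> item2 T1 T2 j0 n"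
      using gj by (auto simp: items2_def item2_def)
  qed
  show ?thesis using A B by blast
qed

lemma rows_le:
  assumes "vec_ge (alpha T1 T2 p) (alpha T1 T2 q)"
    and z1: "zero_one_matrix T1" and z2: "zero_one_matrix T2"
    and n1: "no_zero_row T1" and n2: "no_zero_row T2"
    and pq: "p \<in> {1,2}" "q \<in> {1,2}"
  shows "(\<forall>j\<in>{1,2}. T1 q j \<le> T1 p j) \<and> (\<forall>k\<in>{1,2}. T2 q k \<le> T2 p k)"
proof -
  have ge: "T1 q a * T2 q b \<le> T1 p a * T2 p b" if "a \<in> {1,2}" "b \<in> {1,2}" for a b
  proof -
    have "\<forall>i<4. alpha T1 T2 q ! i \<le> alpha T1 T2 p ! i" using assms(1) by (simp add: vec_ge_def alpha_def tensor2_def)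
    then have "\<forall>i\<in>{0,1,2,3}. alpha T1 T2 q ! i \<le> alpha T1 T2 p ! i" by auto
    then show ?thesis using that by (auto simp: alpha_def tensor2_def mrow_def)
  qed
  have b1: "T1 p j \<le> 1" "T1 q j \<le> 1" if "j \<in> {1,2}" for j
  proof -
    have "T1 p j \<in> {0,1}" "T1 q j \<in> {0,1}" using z1 pq that unfolding zero_one_matrix_def Ball_def by (metis)+
    then show "T1 p j \<le> 1" "T1 q j \<le> 1" by auto
  qed
  have b2: "T2 p j \<le> 1" "T2 q j \<le> 1" if "j \<in> {1,2}" for j
  proof -
    have "T2 p j \<in> {0,1}" "T2 q j \<in> {0,1}" using z2 pq that unfolding zero_one_matrix_def Ball_def by (metis)+
    then show "T2 p j \<le> 1" "T2 q j \<le> 1" by auto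
  qed
  obtain b where b: "b \<in> {1,2}" "T2 q b = 1" using n2 pq b2 unfolding no_zero_row_def
    by (metis le_neq_implies_less less_one)
  obtain a where a: "a \<in> {1,2}" "T1 q a = 1" using n1 pq b1 unfolding no_zero_row_def
    by (metis le_neq_implies_less less_one)
  have 1: "T1 q j \<le> T1 p j" if "j \<in> {1,2}" for j
  proof -
    have "T1 q j \<le> T1 p j * T2 p b" using ge[OF that b(1)] b by simp
    also have "\<dots> \<le> T1 p j" using b2(1)[OF b(1)] by (simp add: mult_le_mono)
    finally show ?thesis .
  qed
  have 2: "T2 q j \<le> T2 p j" if "j \<in> {1,2}" for j
  proof -
    have "T2 q j \<le> T1 p a * T2 p j" using ge[OF a(1) that] a by simp
    also have "\<dots> \<le> T2 p j" using b1(1)[OF a(1)] by (simp add: mult_le_mono)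
    finally show ?thesis .
  qed
  show ?thesis using 1 2 by blast
qed

lemma main_case:
  assumes "vec_ge (alpha T1 T2 p) (alpha T1 T2 q)" and pq: "{p,q} = {(1::nat),2}"
    and z1: "zero_one_matrix T1" and z2: "zero_one_matrix T2"
    and n1: "no_zero_row T1" and n2: "no_zero_row T2"
  shows "dominating_type T1 T2"
proof -
  have pq': "p \<in> {1,2}" "q \<in> {1,2}" using pq by auto
  have r: "(\<forall>j\<in>{1,2}. T1 q j \<le> T1 p j) \<and> (\<forall>k\<in>{1,2}. T2 q k \<le> T2 p k)"
    using rows_le[OF assms(1) z1 z2 n1 n2 pq'] .
  have m: "gamma1 T1 T2 q n \<le> gamma1 T1 T2 p n \<and> gamma2 T1 T2 q n \<le> gamma2 T1 T2 p n" for n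
    using gam_mono[of T1 q p T2 n] r by blast
  show ?thesis unfolding dominating_type_def
    using dom_items[OF pq _ _ z1 z2 n1 n2] m by blast
qed

theorem proposition2:
  fixes T1 T2 :: "nat \<Rightarrow> nat \<Rightarrow> nat"
  assumes "zero_one_matrix T1" and "zero_one_matrix T2"
    and "no_zero_row T1" and "no_zero_row T2"
    and "vec_gt (alpha T1 T2 1) (alpha T1 T2 2) \<or> vec_gt (alpha T1 T2 2) (alpha T1 T2 1)"
  shows "dominating_type T1 T2"
  using assms(5)
proof
  assume "vec_gt (alpha T1 T2 1) (alpha T1 T2 2)"
  then show ?thesis using main_case[of T1 T2 1 2] assms(1-4) by (auto simp: vec_gt_def)
next
  assume "vec_gt (alpha T1 T2 2) (alpha T1 T2 1)"
  then show ?thesis using main_case[of T1 T2 2 1] assms(1-4) by (auto simp: vec_gt_def)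
qed

end
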